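(* Every weakly sparse class of finite graphs with bounded $\mathrm{mw}_3$ has bounded star chromatic number.
   Context: A class of graphs is weakly sparse if there exists $t$ such that no graph in the class contains $K_{t,t}$ as a (not necessarily induced) subgraph. The star chromatic number is the minimum number of colors in a proper vertex coloring in which every two color classes induce a star forest. Merge-width of a graph $G=(V,E)$: with $(V)_2=\{(u,v)\in V^2:u\ne v\}$ and $AB=\{(u,v)\in A\times B:u\neq v\}$, a merge-sequence is $\Sigma=((\mathcal P_1,R_1),\dots,(\mathcal P_m,R_m))$ with partitions $\mathcal P_i$ of $V$, $\mathcal P_{i-1}$ refining $\mathcal P_i$, $\mathcal P_1$ singletons, $\mathcal P_m=\{V\}$; $R_1\subseteq\dots\subseteq R_m=(V)_2$; for all $i$ and $P,Q\in\mathcal P_i$, either $PQ\setminus R_i\subseteq E$ or $(PQ\setminus R_i)\cap E=\emptyset$. $\mathrm{width}_r(\Sigma)=\max_{2\le i\le m}\max_v|\{P\in\mathcal P_{i-1}:\mathrm{dist}_{R_i}(v,P)\le r\}|$ (distance in the undirected graph $(V,R_i)$); $\mathrm{mw}_r(G)=\min_\Sigma\mathrm{width}_r(\Sigma)$. *)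

theory Defs
  imports Main "HOL-Library.Disjoint_Sets"
begin

definition offdiag :: "'a set \<Rightarrow> 'a set \<Rightarrow> ('a \<times> 'a) set" where
  "offdiag A B = {(u, v). u \<in> A \<and> v \<in> B \<and> u \<noteq> v}"

definition fin_graph :: "'a set \<times> ('a \<times> 'a) set \<Rightarrow> bool" where
  "fin_graph G \<longleftrightarrow> finite (fst G) \<and> snd G \<subseteq> offdiag (fst G) (fst G) \<and> sym (snd G)"

definition contains_Ktt :: "'a set \<times> ('a \<times> 'a) set \<Rightarrow> nat \<Rightarrow> bool" where
  "contains_Ktt G t \<longleftrightarrow> (\<exists>A B. A \<subseteq> fst G \<and> B \<subseteq> fst G \<and> A \<inter> B = {} \<and>
      card A = t \<and> card B = t \<and> finite A \<and> finite B \<and> (\<forall>a\<in>A. \<forall>b\<in>B. (a, b) \<in> snd G))"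

definition weakly_sparse :: "('a set \<times> ('a \<times> 'a) set) set \<Rightarrow> bool" where
  "weakly_sparse \<C> \<longleftrightarrow> (\<exists>t. \<forall>G\<in>\<C>. \<not> contains_Ktt G t)"

text \<open>A star forest: every connected component is a star, i.e. for every vertex v
there is a centre c such that every edge in the component of v is incident with c.\<close>
definition star_forest :: "('a \<times> 'a) set \<Rightarrow> bool" where
  "star_forest F \<longleftrightarrow> (\<forall>v. \<exists>c. \<forall>x y. (x, y) \<in> F \<and> (v, x) \<in> F\<^sup>* \<longrightarrow> x = c \<or> y = c)"

definition star_coloring :: "'a set \<times> ('a \<times> 'a) set \<Rightarrow> nat \<Rightarrow> ('a \<Rightarrow> nat) \<Rightarrow> bool" where
  "star_coloring G k col \<longleftrightarrow>
     (\<forall>v\<in>fst G. col v < k) \<and>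
     (\<forall>(u, v)\<in>snd G. col u \<noteq> col v) \<and>
     (\<forall>i j. i \<noteq> j \<longrightarrow>
        (let S = {v \<in> fst G. col v = i \<or> col v = j} in star_forest (snd G \<inter> (S \<times> S))))"

definition star_chromatic_number :: "'a set \<times> ('a \<times> 'a) set \<Rightarrow> nat" where
  "star_chromatic_number G = (LEAST k. \<exists>col. star_coloring G k col)"

definition merge_sequence ::
  "'a set \<times> ('a \<times> 'a) set \<Rightarrow> nat \<Rightarrow> (nat \<Rightarrow> 'a set set) \<Rightarrow> (nat \<Rightarrow> ('a \<times> 'a) set) \<Rightarrow> bool" where
  "merge_sequence G m P R \<longleftrightarrow>
     1 \<le> m \<and>
     (\<forall>i\<in>{1..m}. partition_on (fst G) (P i)) \<and>
     (\<forall>i\<in>{2..m}. \<forall>X\<in>P (i - 1). \<exists>Y\<in>P i. X \<subseteq> Y) \<and>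
     P 1 = {{v} | v. v \<in> fst G} \<and>
     P m = {fst G} \<and>
     (\<forall>i\<in>{2..m}. R (i - 1) \<subseteq> R i) \<and>
     R m = offdiag (fst G) (fst G) \<and>
     (\<forall>i\<in>{1..m}. \<forall>X\<in>P i. \<forall>Y\<in>P i.
        offdiag X Y - R i \<subseteq> snd G \<or> (offdiag X Y - R i) \<inter> snd G = {})"

definition dist_le :: "('a \<times> 'a) set \<Rightarrow> nat \<Rightarrow> 'a \<Rightarrow> 'a set \<Rightarrow> bool" where
  "dist_le R r v X \<longleftrightarrow> (\<exists>u\<in>X. \<exists>k\<le>r. (v, u) \<in> (R \<union> R\<inverse>) ^^ k)"

definition width_le ::
  "'a set \<times> ('a \<times> 'a) set \<Rightarrow> nat \<Rightarrow> (nat \<Rightarrow> 'a set set) \<Rightarrow> (nat \<Rightarrow> ('a \<times> 'a) set) \<Rightarrow> nat \<Rightarrow> nat \<Rightarrow> bool" where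
  "width_le G m P R r k \<longleftrightarrow>
     (\<forall>i\<in>{2..m}. \<forall>v\<in>fst G. card {X \<in> P (i - 1). dist_le (R i) r v X} \<le> k)"

text \<open>r-merge-width; the empty graph (which has no merge sequence since P_1 = {} \<noteq> {V})
is given merge-width 0 by convention.\<close>
definition merge_width :: "nat \<Rightarrow> 'a set \<times> ('a \<times> 'a) set \<Rightarrow> nat" where
  "merge_width r G = (if fst G = {} then 0 else
     (LEAST k. \<exists>m P R. merge_sequence G m P R \<and> width_le G m P R r k))"

end

theory Submission
  imports Defs
begin

lemma card_UN_bound:
  assumes "finite I" "card I \<le> a" "\<And>i. i \<in> I \<Longrightarrow> card (A i) \<le> b"
  shows "card (\<Union>i\<in>I. A i) \<le> a * (b::nat)"
proof -
  have "card (\<Union>i\<in>I. A i) \<le> (\<Sum>i\<in>I. card (A i))" using card_UN_le[OF assms(1)] .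
  also have "\<dots> \<le> card I * b" using sum_bounded_above[of I "\<lambda>i. card (A i)" b] assms(3) by simp
  also have "\<dots> \<le> a * b" using assms(2) by simp
  finally show ?thesis .
qed

definition rball :: "('a \<times> 'a) set \<Rightarrow> nat \<Rightarrow> 'a \<Rightarrow> 'a set" where
  "rball Q r v = {u. \<exists>j\<le>r. (v, u) \<in> (Q \<union> Q\<inverse>) ^^ j}"

lemma rball_1: "(v, u) \<in> Q \<or> (u, v) \<in> Q \<Longrightarrow> u \<in> rball Q 1 v"
  unfolding rball_def by (rule CollectI, rule exI[of _ 1]) auto

lemma rball_step: "u \<in> rball Q r v \<Longrightarrow> (u, w) \<in> Q \<or> (w, u) \<in> Q \<Longrightarrow> w \<in> rball Q (Suc r) v"
  unfolding rball_def
proof (clarsimp)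
  fix j assume j: "j \<le> r" "(v, u) \<in> (Q \<union> Q\<inverse>) ^^ j" "(u, w) \<in> Q \<or> (w, u) \<in> Q"
  then have "(v, w) \<in> (Q \<union> Q\<inverse>) ^^ Suc j" by (auto intro: relpow_Suc_I)
  then show "\<exists>j\<le>Suc r. (v, w) \<in> (Q \<union> Q\<inverse>) ^^ j" using j(1) by (intro exI[of _ "Suc j"]) auto
qed

lemma rball_mono: "r \<le> r' \<Longrightarrow> rball Q r v \<subseteq> rball Q r' v"
  unfolding rball_def by (clarsimp, metis le_trans)

lemma Ktt_mono:
  assumes "contains_Ktt G t'" "t \<le> t'"
  shows "contains_Ktt G t"
proof -
  obtain A B where AB: "A \<subseteq> fst G" "B \<subseteq> fst G" "A \<inter> B = {}" "card A = t'" "card B = t'"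
    "finite A" "finite B" "\<forall>a\<in>A. \<forall>b\<in>B. (a, b) \<in> snd G"
    using assms(1) unfolding contains_Ktt_def by blast
  obtain A' where A': "A' \<subseteq> A" "card A' = t" "finite A'" using obtain_subset_with_card_n[of t A] AB assms(2) by auto
  obtain B' where B': "B' \<subseteq> B" "card B' = t" "finite B'" using obtain_subset_with_card_n[of t B] AB assms(2) by auto
  show ?thesis unfolding contains_Ktt_def
    by (rule exI[of _ A'], rule exI[of _ B']) (use AB A' B' in blast)
qed

locale msq =
  fixes V :: "'a set" and E :: "('a \<times> 'a) set" and m :: nat
    and P :: "nat \<Rightarrow> 'a set set" and R :: "nat \<Rightarrow> ('a \<times> 'a) set" and k t :: nat
  assumes finV: "finite V" and Esub: "E \<subseteq> offdiag V V" and symE: "sym E"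
    and ms: "merge_sequence (V, E) m P R" and wd: "width_le (V, E) m P R 3 k"
    and noK: "\<not> contains_Ktt (V, E) t" and t2: "2 \<le> t"
begin

lemma msc:
  "1 \<le> m"
  "\<forall>i\<in>{1..m}. partition_on V (P i)"
  "\<forall>i\<in>{2..m}. \<forall>X\<in>P (i - 1). \<exists>Y\<in>P i. X \<subseteq> Y"
  "P 1 = {{v} | v. v \<in> V}"
  "P m = {V}"
  "\<forall>i\<in>{1..m}. \<forall>X\<in>P i. \<forall>Y\<in>P i.
        offdiag X Y - R i \<subseteq> E \<or> (offdiag X Y - R i) \<inter> E = {}"
proof -
  note h = ms[unfolded merge_sequence_def fst_conv snd_conv]
  show "1 \<le> m" using h by (elim conjE) assumption
  show "\<forall>i\<in>{1..m}. partition_on V (P i)" using h by (elim conjE) assumption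
  show "\<forall>i\<in>{2..m}. \<forall>X\<in>P (i - 1). \<exists>Y\<in>P i. X \<subseteq> Y" using h by (elim conjE) assumption
  show "P 1 = {{v} | v. v \<in> V}" using h by (elim conjE) assumption
  show "P m = {V}" using h by (elim conjE) assumption
  show "\<forall>i\<in>{1..m}. \<forall>X\<in>P i. \<forall>Y\<in>P i.
        offdiag X Y - R i \<subseteq> E \<or> (offdiag X Y - R i) \<inter> E = {}" using h by (elim conjE) assumption
qed

lemma m1: "1 \<le> m" by (rule msc(1))

lemma part: "i \<in> {1..m} \<Longrightarrow> partition_on V (P i)"
  using msc(2) by blast

lemma part_cover: "i \<in> {1..m} \<Longrightarrow> v \<in> V \<Longrightarrow> \<exists>X\<in>P i. v \<in> X"
  using partition_onD1[OF part[of i]] by blast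

lemma part_sub: "i \<in> {1..m} \<Longrightarrow> X \<in> P i \<Longrightarrow> X \<subseteq> V"
  using partition_onD1[OF part[of i]] by blast

lemma part_fin: "i \<in> {1..m} \<Longrightarrow> finite (P i)"
  using partition_onD1[OF part[of i]] finV by (metis finite_UnionD)

lemma refine: "i \<in> {2..m} \<Longrightarrow> Z \<in> P (i - 1) \<Longrightarrow> \<exists>Q\<in>P i. Z \<subseteq> Q"
  using msc(3) by blast

lemma P1: "P 1 = {{v} | v. v \<in> V}" by (rule msc(4))
lemma Pm: "P m = {V}" by (rule msc(5))

lemma width: "i \<in> {2..m} \<Longrightarrow> v \<in> V \<Longrightarrow> card {Z \<in> P (i - 1). dist_le (R i) 3 v Z} \<le> k"
  using wd unfolding width_le_def fst_conv by blast

lemma hom: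
  assumes "i \<in> {1..m}" "X \<in> P i" "Y \<in> P i" "(a, b) \<in> offdiag X Y" "(a, b) \<notin> R i" "(a, b) \<in> E"
    "(c, d) \<in> offdiag X Y" "(c, d) \<notin> R i"
  shows "(c, d) \<in> E"
proof -
  have "offdiag X Y - R i \<subseteq> E \<or> (offdiag X Y - R i) \<inter> E = {}"
    using msc(6) assms(1-3) by blast
  then show ?thesis using assms(4-8) by blast
qed

lemma E_V: "(a, b) \<in> E \<Longrightarrow> a \<in> V \<and> b \<in> V \<and> a \<noteq> b"
  using Esub unfolding offdiag_def by auto

lemma rball_card:
  assumes i: "i \<in> {2..m}" and v: "v \<in> V" and S: "S \<subseteq> V"
    and small: "\<forall>Z\<in>P (i - 1). card (Z \<inter> S) < t" and r: "r \<le> 3"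
  shows "card (rball (R i) r v \<inter> S) \<le> k * (t - 1)"
proof -
  let ?Zs = "{Z \<in> P (i - 1). dist_le (R i) 3 v Z}"
  have i1: "i - 1 \<in> {1..m}" using i by auto
  have sub: "rball (R i) r v \<inter> S \<subseteq> (\<Union>Z\<in>?Zs. Z \<inter> S)"
  proof
    fix u assume u: "u \<in> rball (R i) r v \<inter> S"
    then have "u \<in> V" using S by auto
    then obtain Z where Z: "Z \<in> P (i - 1)" "u \<in> Z" using part_cover[OF i1] by blast
    have "dist_le (R i) 3 v Z" unfolding dist_le_def
      using u Z r unfolding rball_def by (auto, meson le_trans)
    then show "u \<in> (\<Union>Z\<in>?Zs. Z \<inter> S)" using Z u by auto
  qed
  have finZs: "finite ?Zs" using part_fin[OF i1] by simp
  have "finite (\<Union>Z\<in>?Zs. Z \<inter> S)" using finZs S finV by (auto intro: finite_subset)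
  then have "card (rball (R i) r v \<inter> S) \<le> card (\<Union>Z\<in>?Zs. Z \<inter> S)" using sub card_mono by blast
  also have "\<dots> \<le> k * (t - 1)"
    by (rule card_UN_bound[OF finZs width[OF i v]]) (use small in force)
  finally show ?thesis .
qed

lemma first_time:
  assumes S: "S \<subseteq> V" and tS: "t \<le> card S"
  shows "\<exists>i X. i \<in> {2..m} \<and> X \<in> P i \<and> t \<le> card (X \<inter> S) \<and> (\<forall>Z\<in>P (i - 1). card (Z \<inter> S) < t)"
proof -
  define Q where "Q i \<longleftrightarrow> 1 \<le> i \<and> i \<le> m \<and> (\<exists>X\<in>P i. t \<le> card (X \<inter> S))" for i
  have Qm: "Q m" unfolding Q_def using m1 Pm S tS by (auto simp: Int_absorb1)
  define i0 where "i0 = (LEAST i. Q i)"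
  have Qi0: "Q i0" unfolding i0_def by (rule LeastI[of Q m, OF Qm])
  have not1: "\<not> Q 1"
  proof
    assume "Q 1"
    then obtain X where X: "X \<in> P 1" "t \<le> card (X \<inter> S)" unfolding Q_def by blast
    then obtain v where "X = {v}" using P1 by auto
    then have "card (X \<inter> S) \<le> 1" by (cases "v \<in> S") auto
    then show False using X t2 by simp
  qed
  have i0ge: "2 \<le> i0" using Qi0 not1 unfolding Q_def by (cases "i0 = 1") auto
  have "\<not> Q (i0 - 1)" unfolding i0_def by (rule not_less_Least) (use i0ge i0_def in auto)
  then have "\<forall>Z\<in>P (i0 - 1). card (Z \<inter> S) < t" using i0ge Qi0 unfolding Q_def by auto
  then show ?thesis using Qi0 i0ge unfolding Q_def by auto
qed


lemma core:
  assumes i: "i \<in> {2..m}" and X: "X \<in> P i" and X': "X' \<subseteq> X" "card X' = t" and x1: "x1 \<in> X'"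
    and W: "W \<subseteq> V" and Wadj: "\<forall>w\<in>W. (x1, w) \<in> E"
    and J: "\<forall>x\<in>X'. card {w\<in>W. w \<in> rball (R i) 1 x} \<le> b"
  shows "card W < 2 * t + t * b"
proof (rule ccontr)
  assume nlt: "\<not> card W < 2 * t + t * b"
  have i1: "i \<in> {1..m}" using i by auto
  have finX': "finite X'" using X' t2 by (metis card.infinite not_numeral_le_zero)
  have finW: "finite W" using W finV finite_subset by blast
  define Bad where "Bad = X' \<union> (\<Union>x\<in>X'. {w\<in>W. w \<in> rball (R i) 1 x})"
  have "card (\<Union>x\<in>X'. {w\<in>W. w \<in> rball (R i) 1 x}) \<le> t * b"
    by (rule card_UN_bound[OF finX']) (use X' J in auto)
  then have cBad: "card Bad \<le> t + t * b" unfolding Bad_def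
    using card_Un_le[of X' "\<Union>x\<in>X'. {w\<in>W. w \<in> rball (R i) 1 x}"] X' by linarith
  have finBad: "finite Bad" unfolding Bad_def using finX' finW by auto
  have "card W \<le> card ((W - Bad) \<union> Bad)" by (rule card_mono) (use finW finBad in auto)
  also have "\<dots> \<le> card (W - Bad) + card Bad" by (rule card_Un_le)
  finally have "card W \<le> card (W - Bad) + card Bad" .
  then have "t \<le> card (W - Bad)" using nlt cBad by linarith
  then obtain B where B: "B \<subseteq> W - Bad" "card B = t" "finite B" using obtain_subset_with_card_n by metis
  have XV: "X \<subseteq> V" using part_sub[OF i1 X] .
  have "contains_Ktt (V, E) t" unfolding contains_Ktt_def fst_conv snd_conv
  proof (intro exI conjI)
    show "X' \<subseteq> V" using X' XV by blast
    show "B \<subseteq> V" using B W by blast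
    show "X' \<inter> B = {}" using B unfolding Bad_def by blast
    show "card X' = t" "card B = t" "finite X'" "finite B" using X' B finX' by auto
    show "\<forall>a\<in>X'. \<forall>b\<in>B. (a, b) \<in> E"
    proof (intro ballI)
      fix a w assume a: "a \<in> X'" and w: "w \<in> B"
      have wW: "w \<in> W" and wnB: "w \<notin> Bad" using w B by auto
      then have wV: "w \<in> V" using W by blast
      obtain Y where Y: "Y \<in> P i" "w \<in> Y" using part_cover[OF i1 wV] by blast
      have nR: "(x, w) \<notin> R i" if "x \<in> X'" for x
      proof
        assume "(x, w) \<in> R i"
        then have "w \<in> rball (R i) 1 x" by (intro rball_1) simp
        then show False using wnB wW that unfolding Bad_def by blast
      qed
      have wX': "w \<notin> X'" using wnB unfolding Bad_def by blast
      have e1: "(x1, w) \<in> offdiag X Y" using x1 X' Y wX' unfolding offdiag_def by auto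
      have e2: "(a, w) \<in> offdiag X Y" using a X' Y wX' unfolding offdiag_def by auto
      show "(a, w) \<in> E"
        by (rule hom[OF i1 X Y(1) e1 nR[OF x1] _ e2 nR[OF a]]) (use Wadj wW in blast)
    qed
  qed
  then show False using noK by contradiction
qed

lemma deg:
  assumes S: "S \<subseteq> V" "S \<noteq> {}"
  shows "\<exists>x\<in>S. card {y\<in>S. (x, y) \<in> E} \<le> 2 * t + t * (k * (t - 1))"
proof (cases "card S < t")
  case True
  obtain x where x: "x \<in> S" using S by blast
  have "finite S" using S finV finite_subset by blast
  then have "card {y\<in>S. (x, y) \<in> E} \<le> card S" by (intro card_mono) auto
  then show ?thesis using True x by (intro bexI[of _ x]) auto
next
  case False
  then obtain i X where iX: "i \<in> {2..m}" "X \<in> P i" "t \<le> card (X \<inter> S)"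
    and small: "\<forall>Z\<in>P (i - 1). card (Z \<inter> S) < t"
    using first_time[OF S(1)] by (meson not_less)
  obtain X' where X': "X' \<subseteq> X \<inter> S" "card X' = t" "finite X'"
    using obtain_subset_with_card_n[OF iX(3)] by metis
  then obtain x1 where x1: "x1 \<in> X'" using t2 by (metis card.empty ex_in_conv not_numeral_le_zero)
  have i1: "i \<in> {1..m}" using iX by auto
  have XV: "X \<subseteq> V" using part_sub[OF i1 iX(2)] .
  have "card {y\<in>S. (x1, y) \<in> E} < 2 * t + t * (k * (t - 1))"
  proof (rule core[OF iX(1,2) _ X'(2) x1])
    show "X' \<subseteq> X" using X' by blast
    show "{y\<in>S. (x1, y) \<in> E} \<subseteq> V" using S by blast
    show "\<forall>w\<in>{y\<in>S. (x1, y) \<in> E}. (x1, w) \<in> E" by blast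
    show "\<forall>x\<in>X'. card {w\<in>{y\<in>S. (x1, y) \<in> E}. w \<in> rball (R i) 1 x} \<le> k * (t - 1)"
    proof
      fix x assume x: "x \<in> X'"
      then have xV: "x \<in> V" using X' XV by blast
      have "card {w\<in>{y\<in>S. (x1, y) \<in> E}. w \<in> rball (R i) 1 x} \<le> card (rball (R i) 1 x \<inter> S)"
        by (rule card_mono) (use S finV finite_subset in auto)
      also have "\<dots> \<le> k * (t - 1)" by (rule rball_card[OF iX(1) xV S(1) small]) simp
      finally show "card {w\<in>{y\<in>S. (x1, y) \<in> E}. w \<in> rball (R i) 1 x} \<le> k * (t - 1)" .
    qed
  qed
  then show ?thesis using x1 X' by (intro bexI[of _ x1]) auto
qed


lemma frat:
  assumes D: "D \<subseteq> E" and outD: "\<forall>w. card {y. (w, y) \<in> D} \<le> d0"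
    and S: "S \<subseteq> V" "S \<noteq> {}"
  shows "\<exists>x\<in>S. card {u\<in>S. u \<noteq> x \<and> (\<exists>w. (w, x) \<in> D \<and> (w, u) \<in> D)}
           \<le> (2 * t + t * (k * (3 * t + k * (t - 1)))) * d0 + 2 * t"
proof (cases "card S < t")
  case True
  obtain x where x: "x \<in> S" using S by blast
  have "finite S" using S finV finite_subset by blast
  then have "card {u\<in>S. u \<noteq> x \<and> (\<exists>w. (w, x) \<in> D \<and> (w, u) \<in> D)} \<le> card S" by (intro card_mono) auto
  then show ?thesis using True x by (intro bexI[of _ x]) auto
next
  case False
  then obtain i X where iX: "i \<in> {2..m}" "X \<in> P i" "t \<le> card (X \<inter> S)"
    and small: "\<forall>Z\<in>P (i - 1). card (Z \<inter> S) < t"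
    using first_time[OF S(1)] by (meson not_less)
  obtain X' where X': "X' \<subseteq> X \<inter> S" "card X' = t" "finite X'"
    using obtain_subset_with_card_n[OF iX(3)] by metis
  then obtain x1 where x1: "x1 \<in> X'" using t2 by (metis card.empty ex_in_conv not_numeral_le_zero)
  have i1: "i \<in> {1..m}" using iX by auto
  have i0: "i - 1 \<in> {1..m}" using iX by auto
  have XV: "X \<subseteq> V" using part_sub[OF i1 iX(2)] .
  have finS: "finite S" using S finV finite_subset by blast
  define N1 where "N1 = {u\<in>S. u \<noteq> x1 \<and> (\<exists>w. (w, x1) \<in> D \<and> (w, u) \<in> D)}"
  define wit where "wit u = (SOME w. (w, x1) \<in> D \<and> (w, u) \<in> D)" for u
  have wit: "(wit u, x1) \<in> D \<and> (wit u, u) \<in> D" if "u \<in> N1" for u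
    unfolding wit_def by (rule someI_ex) (use that N1_def in blast)
  define W where "W = wit ` N1"
  have finN1: "finite N1" unfolding N1_def using finS by simp
  have finW: "finite W" unfolding W_def using finN1 by simp
  have outfin: "finite {y. (w, y) \<in> D}" for w
    using D Esub finV unfolding offdiag_def by (auto intro: finite_subset)
  have cN1: "card N1 \<le> card W * d0"
  proof -
    have "N1 \<subseteq> (\<Union>w\<in>W. {y. (w, y) \<in> D})" unfolding W_def using wit by blast
    then have "card N1 \<le> card (\<Union>w\<in>W. {y. (w, y) \<in> D})"
      by (intro card_mono) (use finW outfin in auto)
    also have "\<dots> \<le> card W * d0" by (rule card_UN_bound[OF finW]) (use outD in auto)
    finally show ?thesis .
  qed
  define sec where "sec w = (SOME u. u \<in> N1 \<and> wit u = w)" for w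
  have sec: "sec w \<in> N1 \<and> wit (sec w) = w" if "w \<in> W" for w
    unfolding sec_def by (rule someI_ex) (use that W_def in blast)
  have injsec: "inj_on sec W" by (rule inj_on_inverseI[of _ wit]) (use sec in auto)
  have WD1: "(w, x1) \<in> D" and WD2: "(w, sec w) \<in> D" and secS: "sec w \<in> S" if "w \<in> W" for w
    using sec[OF that] wit[of "sec w"] unfolding N1_def by auto
  have WV: "W \<subseteq> V" using WD1 D E_V by blast
  define b where "b = k * (3 * t + k * (t - 1))"
  have Jb: "card {w\<in>W. w \<in> rball (R i) 1 x} \<le> b" if x: "x \<in> X'" for x
  proof -
    have xV: "x \<in> V" using x X' XV by blast
    define J where "J = {w\<in>W. w \<in> rball (R i) 1 x}"
    define Zs where "Zs = {Z \<in> P (i - 1). dist_le (R i) 3 x Z}"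
    define par where "par Z = (SOME Q. Q \<in> P i \<and> Z \<subseteq> Q)" for Z
    have par: "par Z \<in> P i \<and> Z \<subseteq> par Z" if "Z \<in> P (i - 1)" for Z
      unfolding par_def by (rule someI_ex) (use refine[OF iX(1) that] in blast)
    define Qs where "Qs = par ` Zs"
    have finZs: "finite Zs" unfolding Zs_def using part_fin[OF i0] by simp
    have cQs: "card Qs \<le> k" unfolding Qs_def
      using card_image_le[OF finZs, of par] width[OF iX(1) xV] Zs_def by (metis le_trans)
    have finQs: "finite Qs" unfolding Qs_def using finZs by simp
    have QsP: "Qs \<subseteq> P i" unfolding Qs_def Zs_def using par by blast
    have Jsub: "J \<subseteq> (\<Union>Q\<in>Qs. J \<inter> Q)"
    proof
      fix w assume w: "w \<in> J"
      then have "w \<in> V" using WV J_def by blast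
      then obtain Z where Z: "Z \<in> P (i - 1)" "w \<in> Z" using part_cover[OF i0] by blast
      have "w \<in> rball (R i) 3 x" using w rball_mono[of 1 3 "R i" x] J_def by force
      then have "dist_le (R i) 3 x Z" unfolding dist_le_def rball_def using Z by blast
      then have "par Z \<in> Qs" unfolding Qs_def Zs_def using Z by blast
      then show "w \<in> (\<Union>Q\<in>Qs. J \<inter> Q)" using par[OF Z(1)] Z w by blast
    qed
    have cQ: "card (J \<inter> Q) \<le> 3 * t + k * (t - 1)" if Q: "Q \<in> Qs" for Q
    proof -
      define L where "L = J \<inter> Q"
      define Lin where "Lin = {w\<in>L. sec w \<in> rball (R i) 2 x}"
      define L0 where "L0 = L - Lin"
      have finL: "finite L" unfolding L_def J_def using finW by simp
      have LW: "L \<subseteq> W" unfolding L_def J_def by blast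
      have cLin: "card Lin \<le> k * (t - 1)"
      proof -
        have "card Lin \<le> card (rball (R i) 2 x \<inter> S)"
        proof (rule card_inj_on_le[of sec])
          show "inj_on sec Lin" using injsec LW Lin_def by (auto intro: inj_on_subset)
          show "sec ` Lin \<subseteq> rball (R i) 2 x \<inter> S" using secS LW Lin_def by auto
          show "finite (rball (R i) 2 x \<inter> S)" using finS by simp
        qed
        also have "\<dots> \<le> k * (t - 1)" by (rule rball_card[OF iX(1) xV S(1) small]) simp
        finally show ?thesis .
      qed
      have cL0: "card L0 < 3 * t"
      proof (rule ccontr)
        assume "\<not> card L0 < 3 * t"
        then have ge: "3 * t \<le> card L0" by simp
        have finL0: "finite L0" unfolding L0_def using finL by simp
        obtain L1 where L1: "L1 \<subseteq> L0" "card L1 = t" "finite L1"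
          using obtain_subset_with_card_n[of t L0] ge by auto
        have "card (sec ` (L0 - L1)) = card (L0 - L1)"
          by (rule card_image) (use injsec LW L0_def in \<open>auto intro: inj_on_subset\<close>)
        also have "\<dots> = card L0 - t" using L1 card_Diff_subset by metis
        finally have c1: "card (sec ` (L0 - L1)) = card L0 - t" .
        define B' where "B' = sec ` (L0 - L1) - L1"
        have "card (sec ` (L0 - L1)) \<le> card ((sec ` (L0 - L1) - L1) \<union> L1)"
          by (rule card_mono) (use finL0 L1 in auto)
        also have "\<dots> \<le> card B' + t" using card_Un_le L1 B'_def by metis
        finally have "t \<le> card B'" using c1 ge by linarith
        then obtain B where B: "B \<subseteq> B'" "card B = t" "finite B"
          using obtain_subset_with_card_n by metis
        have "contains_Ktt (V, E) t" unfolding contains_Ktt_def fst_conv snd_conv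
        proof (intro exI conjI)
          show "L1 \<subseteq> V" using L1 L0_def LW WV by blast
          show "B \<subseteq> V" using B B'_def L0_def LW secS S(1) by blast
          show "L1 \<inter> B = {}" using B B'_def by blast
          show "card L1 = t" "card B = t" "finite L1" "finite B" using L1 B by auto
          show "\<forall>a\<in>L1. \<forall>bb\<in>B. (a, bb) \<in> E"
          proof (intro ballI)
            fix a bb assume a: "a \<in> L1" and bb: "bb \<in> B"
            then obtain w' where w': "w' \<in> L0" "w' \<notin> L1" "bb = sec w'" "bb \<notin> L1"
              using B B'_def by blast
            have w'W: "w' \<in> W" using w' L0_def LW by blast
            have w'b: "(w', bb) \<in> E" using WD2[OF w'W] D w' by blast
            have bV: "bb \<in> V" and w'ne: "w' \<noteq> bb" using E_V[OF w'b] by auto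
            have w'r: "w' \<in> rball (R i) 1 x" and w'Q: "w' \<in> Q"
              using w' L0_def L_def J_def by auto
            have bnr: "bb \<notin> rball (R i) 2 x" using w' L0_def Lin_def L_def by auto
            have ar: "a \<in> rball (R i) 1 x" and aQ: "a \<in> Q" and aW: "a \<in> W"
              using a L1 L0_def L_def J_def by auto
            obtain Y where Y: "Y \<in> P i" "bb \<in> Y" using part_cover[OF i1 bV] by blast
            have Qi: "Q \<in> P i" using Q QsP by blast
            have n1: "(w', bb) \<notin> R i"
            proof
              assume "(w', bb) \<in> R i"
              then have "bb \<in> rball (R i) (Suc 1) x" by (intro rball_step[OF w'r]) simp
              then show False using bnr by (simp add: numeral_2_eq_2)
            qed
            have n2: "(a, bb) \<notin> R i"
            proof
              assume "(a, bb) \<in> R i"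
              then have "bb \<in> rball (R i) (Suc 1) x" by (intro rball_step[OF ar]) simp
              then show False using bnr by (simp add: numeral_2_eq_2)
            qed
            have ane: "a \<noteq> bb" using a w' by blast
            show "(a, bb) \<in> E"
              by (rule hom[OF i1 Qi Y(1) _ n1 w'b _ n2]) (use w'Q Y aQ ane w'ne in \<open>auto simp: offdiag_def\<close>)
          qed
        qed
        then show False using noK by contradiction
      qed
      have "card L \<le> card (L0 \<union> Lin)" by (rule card_mono) (use finL L0_def Lin_def in auto)
      also have "\<dots> \<le> card L0 + card Lin" by (rule card_Un_le)
      finally have "card L \<le> card L0 + card Lin" .
      then show ?thesis using cL0 cLin unfolding L_def by linarith
    qed
    have finJ: "finite J" unfolding J_def using finW by simp
    have "card J \<le> card (\<Union>Q\<in>Qs. J \<inter> Q)" by (rule card_mono) (use finJ Jsub in auto)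
    also have "\<dots> \<le> k * (3 * t + k * (t - 1))" by (rule card_UN_bound[OF finQs cQs]) (use cQ in auto)
    finally show ?thesis unfolding J_def b_def .
  qed
  have cW: "card W < 2 * t + t * b"
  proof (rule core[OF iX(1,2) _ X'(2) x1 WV])
    show "X' \<subseteq> X" using X' by blast
    show "\<forall>w\<in>W. (x1, w) \<in> E" using WD1 D symE by (meson in_mono symD)
    show "\<forall>x\<in>X'. card {w\<in>W. w \<in> rball (R i) 1 x} \<le> b" using Jb by blast
  qed
  have "card N1 \<le> (2 * t + t * b) * d0" using cN1 cW by (meson le_trans less_imp_le_nat mult_le_mono1)
  then show ?thesis using x1 X' unfolding N1_def b_def by (intro bexI[of _ x1]) auto
qed

end


lemma orient:
  assumes finV: "finite V" and Esub: "E \<subseteq> offdiag V V" and symE: "sym E"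
    and dg: "\<forall>S\<subseteq>V. S \<noteq> {} \<longrightarrow> (\<exists>x\<in>S. card {y\<in>S. (x, y) \<in> E} \<le> d)"
  shows "\<exists>D (r::'a \<Rightarrow> nat). D \<subseteq> E \<and> (\<forall>a b. (a, b) \<in> E \<longrightarrow> (a, b) \<in> D \<or> (b, a) \<in> D)
     \<and> (\<forall>a b. (a, b) \<in> D \<longrightarrow> r b < r a) \<and> (\<forall>w. card {y. (w, y) \<in> D} \<le> d)"
proof -
  have "\<exists>D (r::'a \<Rightarrow> nat). D \<subseteq> E \<inter> (S \<times> S) \<and> (\<forall>a\<in>S. \<forall>b\<in>S. (a, b) \<in> E \<longrightarrow> (a, b) \<in> D \<or> (b, a) \<in> D)
     \<and> (\<forall>a b. (a, b) \<in> D \<longrightarrow> r b < r a) \<and> (\<forall>w. card {y. (w, y) \<in> D} \<le> d)"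
    if "S \<subseteq> V" for S
  proof -
    have "finite S" using that finV finite_subset by blast
    then show ?thesis using that
    proof (induction S rule: finite_remove_induct)
      case empty
      show ?case by (rule exI[of _ "{}"]) auto
    next
      case (remove A)
      have "\<exists>x\<in>A. card {y\<in>A. (x, y) \<in> E} \<le> d" using dg[rule_format, of A] remove.hyps(2) remove.prems by simp
      then obtain x where x: "x \<in> A" "card {y\<in>A. (x, y) \<in> E} \<le> d" by blast
      have AxV: "A - {x} \<subseteq> V" using remove.prems by blast
      obtain D' r' where D': "D' \<subseteq> E \<inter> ((A - {x}) \<times> (A - {x}))"
        "\<forall>a\<in>A - {x}. \<forall>b\<in>A - {x}. (a, b) \<in> E \<longrightarrow> (a, b) \<in> D' \<or> (b, a) \<in> D'"
        "\<forall>a b. (a, b) \<in> D' \<longrightarrow> r' b < (r' a :: nat)" "\<forall>w. card {y. (w, y) \<in> D'} \<le> d"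
        using remove.IH[OF x(1) AxV] by (elim exE conjE) blast
      define D where "D = D' \<union> {(x, y) | y. y \<in> A \<and> (x, y) \<in> E}"
      define r where "r = r'(x := Suc (Max (r' ` (A - {x}))))"
      have finA: "finite (A - {x})" using remove by simp
      have rlt: "r' y < Suc (Max (r' ` (A - {x})))" if "y \<in> A - {x}" for y
      proof -
        have "r' y \<in> r' ` (A - {x})" using that by blast
        from Max_ge[OF finite_imageI[OF finA] this] show ?thesis by simp
      qed
      have Eirr: "(a, b) \<in> E \<Longrightarrow> a \<noteq> b" for a b using Esub unfolding offdiag_def by auto
      show ?case
      proof (intro exI[of _ D] exI[of _ r] conjI allI impI ballI)
        show "D \<subseteq> E \<inter> (A \<times> A)" unfolding D_def using D'(1) x(1) Esub by auto
      next
        fix a b assume ab: "a \<in> A" "b \<in> A" "(a, b) \<in> E"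
        show "(a, b) \<in> D \<or> (b, a) \<in> D"
        proof -
          show ?thesis
          proof (cases "a = x")
            case True
            then have "(a, b) \<in> D" unfolding D_def using ab by blast
            then show ?thesis ..
          next
            case ax: False
            show ?thesis
            proof (cases "b = x")
              case True
              have "(b, a) \<in> E" using ab(3) symE by (rule symD[rotated])
              then have "(b, a) \<in> D" unfolding D_def using ab True by blast
              then show ?thesis ..
            next
              case False
              then have "(a, b) \<in> D' \<or> (b, a) \<in> D'" using D'(2) ab ax by blast
              then show ?thesis unfolding D_def by blast
            qed
          qed
        qed
      next
        fix a b assume ab: "(a, b) \<in> D"
        show "r b < r a"
        proof (cases "(a, b) \<in> D'")
          case True
          then have "a \<in> A - {x}" "b \<in> A - {x}" using D'(1) by auto
          then show ?thesis using D'(3) True unfolding r_def by auto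
        next
          case False
          then have "a = x" "b \<in> A" "(x, b) \<in> E" using ab unfolding D_def by auto
          then have "b \<in> A - {x}" using Eirr by auto
          then show ?thesis using rlt \<open>a = x\<close> unfolding r_def by auto
        qed
      next
        fix w
        show "card {y. (w, y) \<in> D} \<le> d"
        proof (cases "w = x")
          case True
          have "{y. (w, y) \<in> D} = {y\<in>A. (x, y) \<in> E}" unfolding D_def using D'(1) True by auto
          then show ?thesis using x(2) by simp
        next
          case False
          have "{y. (w, y) \<in> D} = {y. (w, y) \<in> D'}" unfolding D_def using False by auto
          then show ?thesis using D'(4) by simp
        qed
      qed
    qed
  qed
  from this[of V] obtain D and r :: "'a \<Rightarrow> nat" where D: "D \<subseteq> E \<inter> (V \<times> V)"
    "\<forall>a\<in>V. \<forall>b\<in>V. (a, b) \<in> E \<longrightarrow> (a, b) \<in> D \<or> (b, a) \<in> D"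
    "\<forall>a b. (a, b) \<in> D \<longrightarrow> r b < r a" "\<forall>w. card {y. (w, y) \<in> D} \<le> d" by blast
  have cov: "\<forall>a b. (a, b) \<in> E \<longrightarrow> (a, b) \<in> D \<or> (b, a) \<in> D"
  proof (intro allI impI)
    fix a b assume ab: "(a, b) \<in> E"
    then have "a \<in> V" "b \<in> V" using Esub unfolding offdiag_def by auto
    then show "(a, b) \<in> D \<or> (b, a) \<in> D" using D(2) ab by blast
  qed
  have "D \<subseteq> E" using D(1) by blast
  then show ?thesis using cov D(3,4) by blast
qed


lemma coloring:
  assumes finV: "finite V"
    and dg: "\<forall>S\<subseteq>V. S \<noteq> {} \<longrightarrow> (\<exists>x\<in>S. card {y\<in>S. y \<noteq> x \<and> ((x, y) \<in> H \<or> (y, x) \<in> H)} \<le> d)"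
  shows "\<exists>c::'a \<Rightarrow> nat. (\<forall>x\<in>V. c x \<le> d) \<and> (\<forall>x\<in>V. \<forall>y\<in>V. x \<noteq> y \<longrightarrow> (x, y) \<in> H \<longrightarrow> c x \<noteq> c y)"
proof -
  have "\<exists>c::'a \<Rightarrow> nat. (\<forall>x\<in>A. c x \<le> d) \<and> (\<forall>x\<in>A. \<forall>y\<in>A. x \<noteq> y \<longrightarrow> (x, y) \<in> H \<longrightarrow> c x \<noteq> c y)"
    if "A \<subseteq> V" for A
  proof -
    have "finite A" using that finV finite_subset by blast
    then show ?thesis using that
    proof (induction A rule: finite_remove_induct)
      case empty
      show ?case by auto
    next
      case (remove A)
      have "\<exists>x\<in>A. card {y\<in>A. y \<noteq> x \<and> ((x, y) \<in> H \<or> (y, x) \<in> H)} \<le> d"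
        using dg[rule_format, of A] remove.hyps(2) remove.prems by simp
      then obtain x where x: "x \<in> A" "card {y\<in>A. y \<noteq> x \<and> ((x, y) \<in> H \<or> (y, x) \<in> H)} \<le> d"
        by blast
      have AxV: "A - {x} \<subseteq> V" using remove.prems by blast
      obtain c' :: "'a \<Rightarrow> nat" where c': "\<forall>x\<in>A - {x}. c' x \<le> d"
        "\<forall>u\<in>A - {x}. \<forall>y\<in>A - {x}. u \<noteq> y \<longrightarrow> (u, y) \<in> H \<longrightarrow> c' u \<noteq> c' y"
        using remove.IH[OF x(1) AxV] by (elim exE conjE) blast
      define Nb where "Nb = {y\<in>A. y \<noteq> x \<and> ((x, y) \<in> H \<or> (y, x) \<in> H)}"
      have finNb: "finite Nb" unfolding Nb_def using remove(1) by simp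
      have "card (c' ` Nb) \<le> card Nb" by (rule card_image_le[OF finNb])
      then have "card (c' ` Nb) \<le> d" using x(2) unfolding Nb_def by linarith
      then have lt: "card (c' ` Nb) < card {0..d}" by simp
      have "\<not> {0..d} \<subseteq> c' ` Nb"
      proof
        assume "{0..d} \<subseteq> c' ` Nb"
        then have "card {0..d} \<le> card (c' ` Nb)" by (rule card_mono[OF finite_imageI[OF finNb]])
        then show False using lt by linarith
      qed
      then obtain col where col0: "col \<in> {0..d}" "col \<notin> c' ` Nb" by blast
      then have col: "col \<le> d" "col \<notin> c' ` Nb" by auto
      define c where "c = c'(x := col)"
      show ?case
      proof (intro exI[of _ c] conjI ballI impI)
        fix u assume "u \<in> A" then show "c u \<le> d" using c' col unfolding c_def by auto
      next
        fix u y assume u: "u \<in> A" and y: "y \<in> A" and uy: "u \<noteq> y" "(u, y) \<in> H"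
        show "c u \<noteq> c y"
        proof (cases "u = x \<or> y = x")
          case True
          then show ?thesis using col u y uy unfolding c_def Nb_def by auto
        next
          case False
          then show ?thesis using c'(2) u y uy unfolding c_def by auto
        qed
      qed
    qed
  qed
  from this[of V] show ?thesis by blast
qed

lemma rank_degen:
  assumes finV: "finite V" and rk: "\<forall>a b. (a, b) \<in> K \<longrightarrow> r b < (r a :: nat)"
    and outK: "\<forall>w. card {y. (w, y) \<in> K} \<le> q" and finK: "\<forall>w. finite {y. (w, y) \<in> K}"
  shows "\<forall>S\<subseteq>V. S \<noteq> {} \<longrightarrow> (\<exists>x\<in>S. card {y\<in>S. y \<noteq> x \<and> ((x, y) \<in> K \<or> (y, x) \<in> K)} \<le> q)"
proof (intro allI impI)
  fix S assume S: "S \<subseteq> V" "S \<noteq> {}"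
  have finS: "finite S" using S finV finite_subset by blast
  have "Max (r ` S) \<in> r ` S" using finS S by (intro Max_in) auto
  then obtain x where x: "x \<in> S" "r x = Max (r ` S)" by (metis imageE)
  have "\<forall>y\<in>S. r y \<le> r x" using x finS by auto
  then have "{y\<in>S. y \<noteq> x \<and> ((x, y) \<in> K \<or> (y, x) \<in> K)} \<subseteq> {y. (x, y) \<in> K}"
  proof (intro subsetI)
    fix y assume hy: "\<forall>y\<in>S. r y \<le> r x" "y \<in> {y\<in>S. y \<noteq> x \<and> ((x, y) \<in> K \<or> (y, x) \<in> K)}"
    then have "r y \<le> r x" by blast
    then have "(y, x) \<notin> K" using rk by (meson leD)
    then show "y \<in> {y. (x, y) \<in> K}" using hy(2) by blast
  qed
  then have "card {y\<in>S. y \<noteq> x \<and> ((x, y) \<in> K \<or> (y, x) \<in> K)} \<le> card {y. (x, y) \<in> K}"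
    using finK card_mono by blast
  then show "\<exists>x\<in>S. card {y\<in>S. y \<noteq> x \<and> ((x, y) \<in> K \<or> (y, x) \<in> K)} \<le> q" using x outK le_trans by blast
qed

lemma star_forest_noP4:
  assumes symF: "sym F" and irr: "\<forall>a. (a, a) \<notin> F"
    and noP4: "\<forall>a b c d. (a, b) \<in> F \<and> (b, c) \<in> F \<and> (c, d) \<in> F \<and> a \<noteq> c \<and> b \<noteq> d \<longrightarrow> False"
  shows "star_forest F"
  unfolding star_forest_def
proof
  fix v
  show "\<exists>c. \<forall>x y. (x, y) \<in> F \<and> (v, x) \<in> F\<^sup>* \<longrightarrow> x = c \<or> y = c"
  proof (cases "\<exists>x y. (x, y) \<in> F \<and> (v, x) \<in> F\<^sup>*")
    case False
    then show ?thesis by blast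
  next
    case True
    then obtain x0 y0 where e0: "(x0, y0) \<in> F" and vx0: "(v, x0) \<in> F\<^sup>*" by blast
    have e0': "(y0, x0) \<in> F" using e0 symF by (meson symD)
    have "\<exists>c. (c = x0 \<or> c = y0) \<and> ((\<exists>z1 z2. z1 \<noteq> z2 \<and> (c, z1) \<in> F \<and> (c, z2) \<in> F) \<or>
            (c = x0 \<and> (\<forall>z. (x0, z) \<in> F \<longrightarrow> z = y0) \<and> (\<forall>z. (y0, z) \<in> F \<longrightarrow> z = x0)))"
    proof (cases "\<exists>z. (x0, z) \<in> F \<and> z \<noteq> y0")
      case True
      then obtain z where "(x0, z) \<in> F" "z \<noteq> y0" by blast
      then show ?thesis using e0 by (intro exI[of _ x0]) blast
    next
      case nx: False
      show ?thesis
      proof (cases "\<exists>z. (y0, z) \<in> F \<and> z \<noteq> x0")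
        case True
        then obtain z where "(y0, z) \<in> F" "z \<noteq> x0" by blast
        then show ?thesis using e0' by (intro exI[of _ y0]) blast
      next
        case False
        then show ?thesis using nx by (intro exI[of _ x0]) blast
      qed
    qed
    then obtain c where c: "c = x0 \<or> c = y0" and
      cc: "(\<exists>z1 z2. z1 \<noteq> z2 \<and> (c, z1) \<in> F \<and> (c, z2) \<in> F) \<or>
            (c = x0 \<and> (\<forall>z. (x0, z) \<in> F \<longrightarrow> z = y0) \<and> (\<forall>z. (y0, z) \<in> F \<longrightarrow> z = x0))" by blast
    define N where "N = insert c {y. (c, y) \<in> F}"
    have clos: "y \<in> N" if "x \<in> N" "(x, y) \<in> F" for x y
    proof (cases "x = c")
      case True then show ?thesis using that N_def by auto
    next
      case False
      then have cx: "(c, x) \<in> F" using that N_def by auto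
      show ?thesis
      proof (cases "y = c")
        case True then show ?thesis using N_def by auto
      next
        case yc: False
        show ?thesis using cc
        proof
          assume "\<exists>z1 z2. z1 \<noteq> z2 \<and> (c, z1) \<in> F \<and> (c, z2) \<in> F"
          then obtain z1 z2 where zz: "z1 \<noteq> z2" "(c, z1) \<in> F" "(c, z2) \<in> F" by blast
          obtain z where z: "z \<noteq> x" "(c, z) \<in> F"
          proof (cases "z1 = x")
            case True then show ?thesis using that[of z2] zz by auto
          next
            case False then show ?thesis using that[of z1] zz by auto
          qed
          have "(y, x) \<in> F" "(x, c) \<in> F" using that cx symF by (auto dest: symD)
          then have False using noP4[rule_format, of y x c z] z yc by blast
          then show ?thesis ..
        next
          assume h: "c = x0 \<and> (\<forall>z. (x0, z) \<in> F \<longrightarrow> z = y0) \<and> (\<forall>z. (y0, z) \<in> F \<longrightarrow> z = x0)"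
          then have "x = y0" using cx by blast
          then have "y = x0" using h that by blast
          then show ?thesis using h N_def by auto
        qed
      qed
    qed
    have x0N: "x0 \<in> N" using c e0' N_def by auto
    have vN: "v \<in> N" using vx0 x0N
    proof (induction rule: converse_rtrancl_induct)
      case base then show ?case .
    next
      case (step a b)
      then have "(b, a) \<in> F" using symF by (auto dest: symD)
      then show ?case using clos step by blast
    qed
    have inN: "x \<in> N" if "(v, x) \<in> F\<^sup>*" for x
      using that
    proof (induction rule: rtrancl_induct)
      case base then show ?case using vN .
    next
      case (step a b) then show ?case using clos by blast
    qed
    show ?thesis
    proof (intro exI[of _ c] allI impI)
      fix x y assume h: "(x, y) \<in> F \<and> (v, x) \<in> F\<^sup>*"
      then have xN: "x \<in> N" and yN: "y \<in> N" using inN clos by blast+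
      show "x = c \<or> y = c"
      proof (rule ccontr)
        assume "\<not> (x = c \<or> y = c)"
        then have "(c, x) \<in> F" "(c, y) \<in> F" "x \<noteq> c" using xN yN N_def by auto
        then have "(x, y) \<in> F" "(y, c) \<in> F" "(c, x) \<in> F" using h symF by (auto dest: symD)
        moreover have "y \<noteq> x" using h irr by blast
        ultimately show False using noP4[rule_format, of x y c x] \<open>x \<noteq> c\<close> by blast
      qed
    qed
  qed
qed


definition d0f :: "nat \<Rightarrow> nat \<Rightarrow> nat" where "d0f k t = 2 * t + t * (k * (t - 1))"
definition d1f :: "nat \<Rightarrow> nat \<Rightarrow> nat" where
  "d1f k t = (2 * t + t * (k * (3 * t + k * (t - 1)))) * d0f k t + 2 * t"
definition d2f :: "nat \<Rightarrow> nat \<Rightarrow> nat" where "d2f k t = d0f k t + d0f k t * d0f k t"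
definition cbound :: "nat \<Rightarrow> nat \<Rightarrow> nat" where "cbound k t = (d1f k t + 1) * (d2f k t + 1)"

lemma divmod_helper:
  assumes "(r::nat) < N"
  shows "(c * N + r) div N = c" "(c * N + r) mod N = r"
proof -
  have N: "N \<noteq> 0" using assms by simp
  have "(r + c * N) div N = c + r div N" by (rule div_mult_self1[OF N])
  then show "(c * N + r) div N = c" using assms by (simp add: add.commute)
  have "(r + c * N) mod N = r mod N" by (rule mod_mult_self1)
  then show "(c * N + r) mod N = r" using assms by (simp add: add.commute)
qed

lemma graph_star:
  assumes fg: "fin_graph (V, E)" and noK: "\<not> contains_Ktt (V, E) t" and t2: "2 \<le> t"
    and ms: "merge_sequence (V, E) m P R" and wd: "width_le (V, E) m P R 3 k"
  shows "\<exists>col. star_coloring (V, E) (cbound k t) col"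
proof -
  have finV: "finite V" and Esub: "E \<subseteq> offdiag V V" and symE: "sym E"
    using fg unfolding fin_graph_def by auto
  interpret msq V E m P R k t using finV Esub symE ms wd noK t2 by unfold_locales
  define d0 where "d0 = d0f k t"
  define d1 where "d1 = d1f k t"
  define d2 where "d2 = d2f k t"
  have dg: "\<forall>S\<subseteq>V. S \<noteq> {} \<longrightarrow> (\<exists>x\<in>S. card {y\<in>S. (x, y) \<in> E} \<le> d0)"
    using deg unfolding d0_def d0f_def by blast
  obtain D and r :: "'a \<Rightarrow> nat" where D: "D \<subseteq> E" "\<forall>a b. (a, b) \<in> E \<longrightarrow> (a, b) \<in> D \<or> (b, a) \<in> D"
    "\<forall>a b. (a, b) \<in> D \<longrightarrow> r b < r a" "\<forall>w. card {y. (w, y) \<in> D} \<le> d0"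
    using orient[OF finV Esub symE dg] by blast
  define H1 where "H1 = {(a, b). \<exists>w. (w, a) \<in> D \<and> (w, b) \<in> D}"
  have dg1: "\<forall>S\<subseteq>V. S \<noteq> {} \<longrightarrow> (\<exists>x\<in>S. card {y\<in>S. y \<noteq> x \<and> ((x, y) \<in> H1 \<or> (y, x) \<in> H1)} \<le> d1)"
  proof (intro allI impI)
    fix S assume S: "S \<subseteq> V" "S \<noteq> {}"
    obtain x where x: "x \<in> S" "card {u\<in>S. u \<noteq> x \<and> (\<exists>w. (w, x) \<in> D \<and> (w, u) \<in> D)} \<le> d1"
      using frat[OF D(1) D(4)] S unfolding d1_def d1f_def d0_def by blast
    have "{y\<in>S. y \<noteq> x \<and> ((x, y) \<in> H1 \<or> (y, x) \<in> H1)} = {u\<in>S. u \<noteq> x \<and> (\<exists>w. (w, x) \<in> D \<and> (w, u) \<in> D)}"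
      unfolding H1_def by blast
    then have "card {y\<in>S. y \<noteq> x \<and> ((x, y) \<in> H1 \<or> (y, x) \<in> H1)} \<le> d1" using x(2) by simp
    then show "\<exists>x\<in>S. card {y\<in>S. y \<noteq> x \<and> ((x, y) \<in> H1 \<or> (y, x) \<in> H1)} \<le> d1" using x(1) by blast
  qed
  obtain c1 :: "'a \<Rightarrow> nat" where c1: "\<forall>x\<in>V. c1 x \<le> d1" "\<forall>x\<in>V. \<forall>y\<in>V. x \<noteq> y \<longrightarrow> (x, y) \<in> H1 \<longrightarrow> c1 x \<noteq> c1 y"
    using coloring[OF finV dg1] by blast
  define K where "K = D \<union> D O D"
  have outfin: "finite {y. (w, y) \<in> D}" for w
    using D(1) Esub finV unfolding offdiag_def by (auto intro: finite_subset)
  have Kout: "{y. (w, y) \<in> K} = {y. (w, y) \<in> D} \<union> (\<Union>z\<in>{y. (w, y) \<in> D}. {y. (z, y) \<in> D})" for w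
    unfolding K_def by blast
  have finK: "\<forall>w. finite {y. (w, y) \<in> K}" using Kout outfin by simp
  have outK: "\<forall>w. card {y. (w, y) \<in> K} \<le> d2"
  proof
    fix w
    have "card (\<Union>z\<in>{y. (w, y) \<in> D}. {y. (z, y) \<in> D}) \<le> d0 * d0"
      by (rule card_UN_bound[OF outfin]) (use D(4) in auto)
    then have "card {y. (w, y) \<in> K} \<le> d0 + d0 * d0"
      unfolding Kout using card_Un_le D(4) by (meson add_le_mono le_trans)
    then show "card {y. (w, y) \<in> K} \<le> d2" unfolding d2_def d2f_def d0_def by simp
  qed
  have rk: "\<forall>a b. (a, b) \<in> K \<longrightarrow> r b < r a" unfolding K_def using D(3) by (auto, meson less_trans)
  obtain c2 :: "'a \<Rightarrow> nat" where c2: "\<forall>x\<in>V. c2 x \<le> d2" "\<forall>x\<in>V. \<forall>y\<in>V. x \<noteq> y \<longrightarrow> (x, y) \<in> K \<longrightarrow> c2 x \<noteq> c2 y"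
    using coloring[OF finV rank_degen[OF finV rk outK finK]] by blast
  define col where "col v = c1 v * (d2 + 1) + c2 v" for v
  have col_eq: "c1 x = c1 y \<and> c2 x = c2 y" if "x \<in> V" "y \<in> V" "col x = col y" for x y
  proof -
    have a: "c2 x < d2 + 1" "c2 y < d2 + 1" using c2(1) that by auto
    have "col x div (d2 + 1) = c1 x" "col x mod (d2 + 1) = c2 x"
      "col y div (d2 + 1) = c1 y" "col y mod (d2 + 1) = c2 y" unfolding col_def
      using divmod_helper[OF a(1)] divmod_helper[OF a(2)] by blast+
    then show ?thesis using that(3) by metis
  qed
  have K2: "c2 a \<noteq> c2 b" if "a \<in> V" "b \<in> V" "a \<noteq> b" "(a, b) \<in> K \<or> (b, a) \<in> K" for a b
    using c2(2) that by metis
  have H2: "c1 a \<noteq> c1 b" if "a \<in> V" "b \<in> V" "a \<noteq> b" "(a, b) \<in> H1" for a b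
    using c1(2) that by metis
  have proper: "col a \<noteq> col b" if "(a, b) \<in> E" for a b
  proof
    assume eq: "col a = col b"
    have ab: "a \<in> V" "b \<in> V" "a \<noteq> b" using E_V[OF that] by auto
    have "(a, b) \<in> K \<or> (b, a) \<in> K" using D(2) that unfolding K_def by blast
    then show False using K2[OF ab] col_eq[OF ab(1,2) eq] by blast
  qed
  have noP4: False if "(a, b) \<in> E" "(b, c) \<in> E" "(c, d) \<in> E" "a \<noteq> c" "b \<noteq> d"
    "col a = col c" "col b = col d" for a b c d
  proof -
    have V: "a \<in> V" "b \<in> V" "c \<in> V" "d \<in> V" using E_V that(1-3) by auto
    have ac: "c1 a = c1 c \<and> c2 a = c2 c" using col_eq[OF V(1,3) that(6)] .
    have bd: "c1 b = c1 d \<and> c2 b = c2 d" using col_eq[OF V(2,4) that(7)] .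
    have cb: "(c, b) \<in> D"
    proof -
      have o1: "(a, b) \<in> D \<or> (b, a) \<in> D" and o2: "(b, c) \<in> D \<or> (c, b) \<in> D" using D(2) that by auto
      show ?thesis
      proof (rule ccontr)
        assume ncb: "(c, b) \<notin> D"
        then have bc: "(b, c) \<in> D" using o2 by blast
        show False using o1
        proof
          assume "(a, b) \<in> D"
          then have "(a, c) \<in> K" using bc unfolding K_def by blast
          then show False using K2[OF V(1,3) that(4)] ac by blast
        next
          assume "(b, a) \<in> D"
          then have "(a, c) \<in> H1" using bc unfolding H1_def by blast
          then show False using H2[OF V(1,3) that(4)] ac by blast
        qed
      qed
    qed
    have "(c, d) \<in> D \<or> (d, c) \<in> D" using D(2) that by auto
    then show False
    proof
      assume "(c, d) \<in> D"
      then have "(b, d) \<in> H1" using cb unfolding H1_def by blast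
      then show False using H2[OF V(2,4) that(5)] bd by blast
    next
      assume "(d, c) \<in> D"
      then have "(d, b) \<in> K" using cb unfolding K_def by blast
      then show False using K2[OF V(4,2)] that(5) bd by metis
    qed
  qed
  have "star_coloring (V, E) (cbound k t) col"
    unfolding star_coloring_def fst_conv snd_conv Let_def
  proof (intro conjI)
    show "\<forall>v\<in>V. col v < cbound k t"
    proof
    fix v assume v: "v \<in> V"
    have "c1 v * (d2 + 1) \<le> d1 * (d2 + 1)" using c1(1) v by (intro mult_le_mono1) auto
    moreover have "c2 v \<le> d2" using c2(1) v by auto
    moreover have "(d1 + 1) * (d2 + 1) = d1 * (d2 + 1) + d2 + 1" by (simp add: algebra_simps)
    ultimately show "col v < cbound k t" unfolding col_def cbound_def d1_def d2_def by linarith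
    qed
  next
    show "\<forall>(u, v)\<in>E. col u \<noteq> col v" using proper by blast
  next
    show "\<forall>i j. i \<noteq> j \<longrightarrow> star_forest (E \<inter> ({v \<in> V. col v = i \<or> col v = j} \<times> {v \<in> V. col v = i \<or> col v = j}))"
    proof (intro allI impI)
    fix i j :: nat assume ij: "i \<noteq> j"
    define S where "S = {v \<in> V. col v = i \<or> col v = j}"
    have "star_forest (E \<inter> (S \<times> S))"
    proof (rule star_forest_noP4)
      show "sym (E \<inter> (S \<times> S))" using symE unfolding sym_def by blast
      show "\<forall>a. (a, a) \<notin> E \<inter> (S \<times> S)" using E_V by blast
      show "\<forall>a b c d. (a, b) \<in> E \<inter> (S \<times> S) \<and> (b, c) \<in> E \<inter> (S \<times> S) \<and> (c, d) \<in> E \<inter> (S \<times> S)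
           \<and> a \<noteq> c \<and> b \<noteq> d \<longrightarrow> False"
      proof (intro allI impI)
        fix a b c d assume h: "(a, b) \<in> E \<inter> (S \<times> S) \<and> (b, c) \<in> E \<inter> (S \<times> S) \<and> (c, d) \<in> E \<inter> (S \<times> S)
           \<and> a \<noteq> c \<and> b \<noteq> d"
        have p: "col a \<noteq> col b" "col b \<noteq> col c" "col c \<noteq> col d" using proper h by auto
        have s: "col a = i \<or> col a = j" "col b = i \<or> col b = j" "col c = i \<or> col c = j" "col d = i \<or> col d = j"
          using h unfolding S_def by auto
        have "col a = col c" "col b = col d" using p s by auto
        then show False using noP4[of a b c d] h by blast
      qed
    qed
    then show "star_forest (E \<inter> ({v \<in> V. col v = i \<or> col v = j} \<times> {v \<in> V. col v = i \<or> col v = j}))"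
      unfolding S_def .
    qed
  qed
  then show ?thesis by blast
qed


lemma trivial_ms:
  assumes finV: "finite V" and Esub: "E \<subseteq> offdiag V V" and ne: "V \<noteq> {}"
  shows "\<exists>k' m P R. merge_sequence (V, E) m P R \<and> width_le (V, E) m P R 3 k'"
proof -
  define P :: "nat \<Rightarrow> 'a set set" where "P i = (if i = 1 then (\<lambda>x. {x}) ` V else {V})" for i
  define R :: "nat \<Rightarrow> ('a \<times> 'a) set" where "R i = (if i = 1 then {} else offdiag V V)" for i
  have "merge_sequence (V, E) 2 P R" unfolding merge_sequence_def fst_conv snd_conv
  proof (intro conjI)
    show "1 \<le> (2::nat)" by simp
    show "\<forall>i\<in>{1..2}. partition_on V (P i)"
    proof
      fix i :: nat assume "i \<in> {1..2}"
      then show "partition_on V (P i)" unfolding P_def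
        using partition_on_singletons partition_on_space[OF ne] by auto
    qed
    show "\<forall>i\<in>{2..2}. \<forall>X\<in>P (i - 1). \<exists>Y\<in>P i. X \<subseteq> Y" unfolding P_def by auto
    show "P 1 = {{v} |v. v \<in> V}" unfolding P_def by auto
    show "P 2 = {V}" unfolding P_def by auto
    show "\<forall>i\<in>{2..2}. R (i - 1) \<subseteq> R i" unfolding R_def by auto
    show "R 2 = offdiag V V" unfolding R_def by auto
    show "\<forall>i\<in>{1..2}. \<forall>X\<in>P i. \<forall>Y\<in>P i. offdiag X Y - R i \<subseteq> E \<or> (offdiag X Y - R i) \<inter> E = {}"
    proof (intro ballI)
      fix i :: nat and X Y assume i: "i \<in> {1..2}" and X: "X \<in> P i" and Y: "Y \<in> P i"
      show "offdiag X Y - R i \<subseteq> E \<or> (offdiag X Y - R i) \<inter> E = {}"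
      proof (cases "i = 1")
        case True
        then obtain a b where ab: "X = {a}" "Y = {b}" using X Y unfolding P_def by auto
        show ?thesis
        proof (cases "(a, b) \<in> E")
          case True then show ?thesis using ab unfolding offdiag_def by auto
        next
          case False then show ?thesis using ab unfolding offdiag_def by auto
        qed
      next
        case False
        then have "X = V" "Y = V" "R i = offdiag V V" using X Y unfolding P_def R_def by auto
        then show ?thesis by auto
      qed
    qed
  qed
  moreover have "width_le (V, E) 2 P R 3 (card V)" unfolding width_le_def fst_conv
  proof (intro ballI)
    fix i :: nat and v assume i: "i \<in> {2..2}" and v: "v \<in> V"
    then have "i = 2" by simp
    have "card {Z \<in> P (i - 1). dist_le (R i) 3 v Z} \<le> card ((\<lambda>x. {x}) ` V)"
      by (rule card_mono) (use finV \<open>i = 2\<close> in \<open>auto simp: P_def\<close>)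
    also have "\<dots> \<le> card V" by (rule card_image_le[OF finV])
    finally show "card {Z \<in> P (i - 1). dist_le (R i) 3 v Z} \<le> card V" .
  qed
  ultimately show ?thesis by blast
qed

lemma star_num_le: "star_coloring G c col \<Longrightarrow> star_chromatic_number G \<le> c"
  unfolding star_chromatic_number_def by (rule Least_le) blast

theorem lemma7p5:
  fixes \<C> :: "('a set \<times> ('a \<times> 'a) set) set"
  assumes "\<forall>G\<in>\<C>. fin_graph G"
    and "weakly_sparse \<C>"
    and "\<exists>k. \<forall>G\<in>\<C>. merge_width 3 G \<le> k"
  shows "\<exists>c. \<forall>G\<in>\<C>. star_chromatic_number G \<le> c"
proof -
  obtain t0 where t0: "\<forall>G\<in>\<C>. \<not> contains_Ktt G t0" using assms(2) unfolding weakly_sparse_def by blast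
  define t where "t = max t0 2"
  have t2: "2 \<le> t" unfolding t_def by simp
  have noK: "\<not> contains_Ktt G t" if "G \<in> \<C>" for G
    using t0 that Ktt_mono[of G t t0] unfolding t_def by auto
  obtain k where k: "\<forall>G\<in>\<C>. merge_width 3 G \<le> k" using assms(3) by blast
  show ?thesis
  proof (intro exI[of _ "cbound k t"] ballI)
    fix G assume G: "G \<in> \<C>"
    obtain V E where VE: "G = (V, E)" by (cases G)
    have fg: "fin_graph (V, E)" using assms(1) G VE by simp
    then have finV: "finite V" and Esub: "E \<subseteq> offdiag V V" unfolding fin_graph_def by auto
    show "star_chromatic_number G \<le> cbound k t"
    proof (cases "V = {}")
      case True
      then have "E = {}" using Esub unfolding offdiag_def by auto
      then have "star_coloring (V, E) (cbound k t) (\<lambda>_. 0)"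
        unfolding star_coloring_def star_forest_def using True by simp
      then show ?thesis using star_num_le VE by blast
    next
      case False
      let ?Q = "\<lambda>k'. \<exists>m P R. merge_sequence (V, E) m P R \<and> width_le (V, E) m P R 3 k'"
      have ex: "\<exists>k'. ?Q k'" using trivial_ms[OF finV Esub False] by blast
      have mw: "merge_width 3 (V, E) = (LEAST k'. ?Q k')" unfolding merge_width_def using False by simp
      have "?Q (LEAST k'. ?Q k')" using ex by (rule LeastI_ex)
      then obtain m P R where ms: "merge_sequence (V, E) m P R"
        and wd: "width_le (V, E) m P R 3 (merge_width 3 (V, E))" unfolding mw by blast
      have "merge_width 3 (V, E) \<le> k" using k G VE by auto
      then have wd': "width_le (V, E) m P R 3 k" using wd unfolding width_le_def by (meson le_trans)
      obtain col where "star_coloring (V, E) (cbound k t) col"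
        using graph_star[OF fg noK[OF G[unfolded VE]] t2 ms wd'] by blast
      then show ?thesis using star_num_le VE by blast
    qed
  qed
qed

end
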